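(* Let $N\geq1$, $m\geq0$, $\varepsilon>0$, $R>0$, let $a\in C(\mathbb{R}^N)\cap L^\infty(\mathbb{R}^N)$, and let $J\in L^1(\mathbb{R}^N)$ be nonnegative; set $J_\varepsilon(z)=\varepsilon^{-N}J(z/\varepsilon)$ and, for $\varphi\in C(\overline{B_R})$, $$\mathcal{M}_{R,\varepsilon,m}[\varphi](x)=\frac{1}{\varepsilon^m}\left(\int_{B_R}J_\varepsilon(x-y)\varphi(y)\,\mathrm{d}y-\varphi(x)\right).$$ Let $v\in C(\overline{B_R})$ be positive and $u\in C(\overline{B_R})$ be nonnegative, and suppose that $\mathcal{M}_{R,\varepsilon,m}[u]+u(a-u)\geq0$ and $\mathcal{M}_{R,\varepsilon,m}[v]+v(a-v)\leq0$ in $\overline{B_R}$. Then $u\leq v$ in $\overline{B_R}$.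
   Context: $B_R$ is the open Euclidean ball of radius $R$ centred at the origin; $\overline{B_R}$ its closure. *)

theory Defs
  imports "HOL-Analysis.Analysis"
begin

definition kernel_scaled :: "real \<Rightarrow> ('a::euclidean_space \<Rightarrow> real) \<Rightarrow> 'a \<Rightarrow> real" where
  "kernel_scaled \<epsilon> J z = J (z /\<^sub>R \<epsilon>) / \<epsilon> ^ DIM('a)"

definition nonlocal_op ::
  "real \<Rightarrow> real \<Rightarrow> real \<Rightarrow> ('a::euclidean_space \<Rightarrow> real) \<Rightarrow> ('a \<Rightarrow> real) \<Rightarrow> 'a \<Rightarrow> real" where
  "nonlocal_op R \<epsilon> m J \<phi> x =
     ((LINT y:ball 0 R|lborel. kernel_scaled \<epsilon> J (x - y) * \<phi> y) - \<phi> x) / \<epsilon> powr m"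

end

theory Submission
  imports Defs
begin

lemma kernel_integrable:
  fixes J :: "'a::euclidean_space \<Rightarrow> real"
  assumes J: "integrable lborel J" and e: "\<epsilon> > 0"
  shows "integrable lborel (\<lambda>y. kernel_scaled \<epsilon> J (x - y))"
proof -
  define c where "c = - 1 / \<epsilon>"
  define t where "t = x /\<^sub>R \<epsilon>"
  have c0: "c \<noteq> 0" using e by (simp add: c_def)
  have Jm[measurable]: "J \<in> borel_measurable borel" using J by auto
  have "integrable (density (distr lborel borel (\<lambda>y. t + c *\<^sub>R y)) (\<lambda>_. \<bar>c\<bar>^DIM('a))) J"
    using J lborel_affine[OF c0, of t] by simp
  then have "integrable (distr lborel borel (\<lambda>y. t + c *\<^sub>R y)) (\<lambda>y. \<bar>c\<bar>^DIM('a) *\<^sub>R J y)"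
    by (subst (asm) integrable_density) auto
  then have "integrable lborel (\<lambda>y. J (t + c *\<^sub>R y))"
    using c0 by (subst (asm) integrable_distr_eq) auto
  then have I: "integrable lborel (\<lambda>y. \<bar>c\<bar>^DIM('a) *\<^sub>R J (t + c *\<^sub>R y))"
    by (simp add: integrable_mult_right)
  have eq:  "\<bar>c\<bar>^DIM('a) *\<^sub>R J (t + c *\<^sub>R y) = kernel_scaled \<epsilon> J (x - y)" for y
  proof -
    have "t + c *\<^sub>R y = (x - y) /\<^sub>R \<epsilon>"
      using e by (simp add: t_def c_def scaleR_diff_right divide_inverse_commute)
    moreover have "\<bar>c\<bar> = 1 / \<epsilon>" using e by (simp add: c_def)
    ultimately show ?thesis by (simp add: kernel_scaled_def power_one_over)
  qed
  show ?thesis using I by (simp only: eq)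
qed

lemma prod_integrable:
  fixes J \<phi> :: "'a::euclidean_space \<Rightarrow> real"
  assumes J: "integrable lborel J" and e: "\<epsilon> > 0"
    and phi: "continuous_on (cball 0 R) \<phi>"
  shows "set_integrable lborel (ball 0 R) (\<lambda>y. kernel_scaled \<epsilon> J (x - y) * \<phi> y)"
proof -
  let ?K = "\<lambda>y. kernel_scaled \<epsilon> J (x - y)"
  have K: "integrable lborel ?K" by (rule kernel_integrable[OF J e])
  obtain B where B: "\<And>y. y \<in> cball 0 R \<Longrightarrow> norm (\<phi> y) \<le> B"
    using compact_imp_bounded[OF compact_continuous_image[OF phi compact_cball]]
    unfolding bounded_iff by (metis image_eqI)
  have Km: "?K \<in> borel_measurable lborel" using K by auto
  have phb: "continuous_on (ball 0 R) \<phi>" using phi continuous_on_subset ball_subset_cball by blast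
  have pm: "(\<lambda>y. indicator (ball 0 R) y *\<^sub>R \<phi> y) \<in> borel_measurable borel"
    by (rule borel_measurable_continuous_on_indicator[OF _ phb]) auto
  have gm: "(\<lambda>y. ?K y * (indicator (ball 0 R) y *\<^sub>R \<phi> y)) \<in> borel_measurable lborel"
    using Km pm by measurable
  have "integrable lborel (\<lambda>y. ?K y * (indicator (ball 0 R) y *\<^sub>R \<phi> y))"
  proof (rule Bochner_Integration.integrable_bound[OF integrable_mult_right[OF K, of B] gm], rule AE_I2)
    fix y
    have "\<bar>indicator (ball 0 R) y *\<^sub>R \<phi> y\<bar> \<le> \<bar>B\<bar>"
      using B[of y] by (auto simp: indicator_def)
    then have "\<bar>?K y\<bar> * \<bar>indicator (ball 0 R) y *\<^sub>R \<phi> y\<bar> \<le> \<bar>?K y\<bar> * \<bar>B\<bar>"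
      by (intro mult_left_mono) auto
    then show "norm (?K y * (indicator (ball 0 R) y *\<^sub>R \<phi> y)) \<le> norm (B * ?K y)"
      by (simp add: abs_mult mult_ac)
  qed
  then show ?thesis unfolding set_integrable_def by (simp add: mult_ac)
qed

theorem lemma4p2:
  fixes a J u v :: "'a::euclidean_space \<Rightarrow> real" and m \<epsilon> R :: real
  assumes "m \<ge> 0" and "\<epsilon> > 0" and "R > 0"
    and "continuous_on UNIV a" and "bounded (range a)"
    and "integrable lborel J" and "\<And>z. J z \<ge> 0"
    and "continuous_on (cball 0 R) v" and "\<And>x. x \<in> cball 0 R \<Longrightarrow> v x > 0"
    and "continuous_on (cball 0 R) u" and "\<And>x. x \<in> cball 0 R \<Longrightarrow> u x \<ge> 0"
    and "\<And>x. x \<in> cball 0 R \<Longrightarrow> nonlocal_op R \<epsilon> m J u x + u x * (a x - u x) \<ge> 0"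
    and "\<And>x. x \<in> cball 0 R \<Longrightarrow> nonlocal_op R \<epsilon> m J v x + v x * (a x - v x) \<le> 0"
  shows "\<forall>x \<in> cball 0 R. u x \<le> v x"
proof -
  note e = assms(2) and J = assms(6) and Jnn = assms(7)
  note vc = assms(8) and vpos = assms(9) and uc = assms(10) and unn = assms(11)
  note subu = assms(12) and supv = assms(13)
  let ?S = "cball (0::'a) R"
  have fc: "continuous_on ?S (\<lambda>x. u x / v x)"
    using uc vc vpos by (intro continuous_intros) (auto, metis less_irrefl)
  obtain x0 where x0: "x0 \<in> ?S" and mx: "\<And>y. y \<in> ?S \<Longrightarrow> u y / v y \<le> u x0 / v x0"
    using continuous_attains_sup[OF compact_cball _ fc] assms(3) by fastforce
  define g where "g = u x0 / v x0"
  have ule: "u y \<le> g * v y" if "y \<in> ?S" for y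
    using mx[OF that] vpos[OF that] by (simp add: g_def divide_le_eq mult_ac)
  show ?thesis
  proof (cases "g \<le> 1")
    case True
    show ?thesis
    proof
      fix x assume x: "x \<in> ?S"
      have "g * v x \<le> 1 * v x" using True vpos[OF x] by (intro mult_right_mono) auto
      then show "u x \<le> v x" using ule[OF x] by simp
    qed
  next
    case False
    then have g1: "g > 1" by simp
    define v0 where "v0 = v x0"
    have v0: "v0 > 0" using vpos[OF x0] by (simp add: v0_def)
    have u0: "u x0 = g * v0" using v0 by (simp add: g_def v0_def)
    let ?K = "\<lambda>y. kernel_scaled \<epsilon> J (x0 - y)"
    define A where "A = (LINT y:ball 0 R|lborel. ?K y * u y)"
    define B where "B = (LINT y:ball 0 R|lborel. ?K y * v y)"
    have iu: "set_integrable lborel (ball 0 R) (\<lambda>y. ?K y * u y)"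
      by (rule prod_integrable[OF J e uc])
    have iv: "set_integrable lborel (ball 0 R) (\<lambda>y. ?K y * v y)"
      by (rule prod_integrable[OF J e vc])
    have "(LINT y:ball 0 R|lborel. ?K y * (g * v y - u y)) = g * B - A"
    proof -
      have "(LINT y:ball 0 R|lborel. ?K y * (g * v y - u y))
          = (LINT y:ball 0 R|lborel. g * (?K y * v y) - ?K y * u y)"
        by (simp add: algebra_simps)
      also have "\<dots> = (LINT y:ball 0 R|lborel. g * (?K y * v y)) - A"
        unfolding A_def using iu iv by (intro set_integral_diff) (auto intro: set_integrable_mult_right)
      also have "\<dots> = g * B - A" unfolding B_def by (simp add: set_integral_mult_right)
      finally show ?thesis .
    qed
    moreover have "(LINT y:ball 0 R|lborel. ?K y * (g * v y - u y)) \<ge> 0"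
    proof -
      have "indicator (ball 0 R) y *\<^sub>R (?K y * (g * v y - u y)) \<ge> 0" for y :: 'a
      proof (cases "y \<in> ball 0 R")
        case True
        then have "y \<in> ?S" by auto
        then have "g * v y - u y \<ge> 0" using ule by auto
        moreover have "?K y \<ge> 0" using Jnn e by (simp add: kernel_scaled_def)
        ultimately show ?thesis using True by simp
      qed simp
      then show ?thesis unfolding set_lebesgue_integral_def
        by (intro Bochner_Integration.integral_nonneg) auto
    qed
    ultimately have GBA: "g * B - A \<ge> 0" by simp
    define p where "p = \<epsilon> powr m"
    have p: "p > 0" using e by (simp add: p_def)
    have h1: "(A - g * v0) / p + g * v0 * (a x0 - g * v0) \<ge> 0"
      using subu[OF x0] u0 unfolding nonlocal_op_def A_def p_def by simp
    have h2: "(B - v0) / p + v0 * (a x0 - v0) \<le> 0"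
      using supv[OF x0] unfolding nonlocal_op_def B_def p_def v0_def by simp
    have h1': "A - g * v0 + p * (g * v0 * (a x0 - g * v0)) \<ge> 0"
    proof -
      have "p * ((A - g * v0) / p + g * v0 * (a x0 - g * v0)) = A - g * v0 + p * (g * v0 * (a x0 - g * v0))"
        using p by (simp add: distrib_left)
      then show ?thesis using mult_nonneg_nonneg[OF less_imp_le[OF p] h1] by simp
    qed
    have h2': "B - v0 + p * (v0 * (a x0 - v0)) \<le> 0"
    proof -
      have "p * ((B - v0) / p + v0 * (a x0 - v0)) = B - v0 + p * (v0 * (a x0 - v0))"
        using p by (simp add: distrib_left)
      then show ?thesis using mult_nonneg_nonpos[OF less_imp_le[OF p] h2] by simp
    qed
    have h2'': "g * B - g * v0 + p * (g * v0 * (a x0 - v0)) \<le> 0"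
      using mult_left_mono[OF h2', of g] g1 by (simp add: algebra_simps)
    have "g * B - A \<le> p * g * v0 * v0 * (1 - g)"
      using h1' h2'' by (simp add: algebra_simps)
    moreover have "p * g * v0 * v0 * (1 - g) < 0"
      using p g1 v0 by (simp add: mult_pos_neg)
    ultimately show ?thesis using GBA by linarith
  qed
qed

end
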